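(* Let $I\subset[0,+\infty)$ be an open interval, $n\in\mathbb{N}$, $\beta\in\{-1,1\}$, $\kappa,\mu\in\,]-1,+\infty[$, $N\ge n$, $\xi\in[0,1]$, $t_0\in I$, $T>0$ with $t_0+\beta T\in I$. If the noise $\{\varpi(\tau),\tau\ge0\}$ satisfies conditions (C1), (C2) and (C3), then the noise error contribution of the Jacobi estimator $\hat D^{\mu,\kappa}_{\beta T,N,\xi}x^{(n)}(t_0)$ satisfies $e_{\varpi}^{\beta T}(t_0)=0$ almost surely.
   Context: For $a,b>-1$ let $w^{a,b}(t)=t^{b}(1-t)^{a}$, $P_k^{a,b}(t)=\sum_{s=0}^{k}\binom{k+a}{s}\binom{k+b}{k-s}(t-1)^{k-s}t^{s}$ and $\|P_k^{a,b}\|^2=\int_0^1 w^{a,b}(P_k^{a,b})^2$. With $q=N-n$ the Jacobi estimator kernel is $$p^{\beta T}(\tau)=\frac{(-1)^n}{(\beta T)^n}\sum_{i=0}^{q}\frac{P_i^{\mu+n,\kappa+n}(\xi)}{\|P_i^{\mu+n,\kappa+n}\|^2}\frac{d^n}{d\tau^n}\Big[w^{\mu+n,\kappa+n}(\tau)P_i^{\mu+n,\kappa+n}(\tau)\Big],$$ and the noise error contribution is the mean-square integral $e_{\varpi}^{\beta T}(t_0)=\int_0^1 p^{\beta T}(\tau)\varpi(t_0+\beta T\tau)d\tau$. (C1): $\{\varpi(\tau),\tau\ge0\}$ is a continuous parameter stochastic process with finite second moments whose mean value function and covariance kernel are continuous. (C2): for all $t_0$, $s$, $\tau$ with $t_0+s,t_0+\tau\in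 I$, $E[\varpi(t_0+\tau)]=\sum_{i=0}^{n-1}\nu_i t_0^{k_1(i)}\tau^i+E[\varpi(\tau)]$ and $\mathrm{Cov}[\varpi(t_0+s),\varpi(t_0+\tau)]=\Big(\sum_{i=0}^{n_1}\eta_i t_0^{k_2(i)}\tau^i\Big)\Big(\sum_{i=0}^{n_2}\eta'_i t_0^{k_3(i)}s^i\Big)+\mathrm{Cov}[\varpi(s),\varpi(\tau)]$, where $k_1(i),k_2(i),k_3(i)\in\mathbb{N}$, $\nu_i,\eta_i,\eta'_i\in\mathbb{R}$, $n_1,n_2\in\mathbb{N}$ with $\min(n_1,n_2)\le n-1$. (C3): for all $s,\tau\in I$, $E[\varpi(\tau)]=\sum_{i=0}^{n-1}\bar\nu_i\tau^i$ and $\mathrm{Cov}[\varpi(s),\varpi(\tau)]=\Big(\sum_{i=0}^{n_1}\bar\eta_i\tau^i\Big)\Big(\sum_{i=0}^{n_2}\bar\eta'_i s^i\Big)$ with $\bar\nu_i,\bar\eta_i,\bar\eta'_i\in\mathbb{R}$ and $\min(n_1,n_2)\le n-1$. *)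

theory Defs
  imports "HOL-Probability.Probability"
begin

definition jweight :: "real \<Rightarrow> real \<Rightarrow> real \<Rightarrow> real" where
  "jweight a b t = t powr b * (1 - t) powr a"

definition jacobiP :: "real \<Rightarrow> real \<Rightarrow> nat \<Rightarrow> real \<Rightarrow> real" where
  "jacobiP a b k t =
     (\<Sum>s = 0..k. ((real k + a) gchoose s) * ((real k + b) gchoose (k - s))
                   * (t - 1) ^ (k - s) * t ^ s)"

definition jnorm2 :: "real \<Rightarrow> real \<Rightarrow> nat \<Rightarrow> real" where
  "jnorm2 a b k = integral {0..1} (\<lambda>t. jweight a b t * (jacobiP a b k t)\<^sup>2)"

definition jacobi_kernel ::
  "nat \<Rightarrow> nat \<Rightarrow> real \<Rightarrow> real \<Rightarrow> real \<Rightarrow> real \<Rightarrow> real \<Rightarrow> real \<Rightarrow> real" where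
  "jacobi_kernel n N \<mu> \<kappa> \<xi> \<beta> T \<tau> =
     (-1) ^ n / (\<beta> * T) ^ n *
     (\<Sum>i = 0..N - n.
        jacobiP (\<mu> + real n) (\<kappa> + real n) i \<xi> / jnorm2 (\<mu> + real n) (\<kappa> + real n) i
        * (deriv ^^ n) (\<lambda>t. jweight (\<mu> + real n) (\<kappa> + real n) t
                              * jacobiP (\<mu> + real n) (\<kappa> + real n) i t) \<tau>)"

definition mean :: "'a measure \<Rightarrow> ('a \<Rightarrow> real) \<Rightarrow> real" where
  "mean M X = (\<integral>x. X x \<partial>M)"

definition covar :: "'a measure \<Rightarrow> ('a \<Rightarrow> real) \<Rightarrow> ('a \<Rightarrow> real) \<Rightarrow> real" where
  "covar M X Y = (\<integral>x. (X x - mean M X) * (Y x - mean M Y) \<partial>M)"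

definition ms_riemann_integral ::
  "'a measure \<Rightarrow> (real \<Rightarrow> 'a \<Rightarrow> real) \<Rightarrow> real \<Rightarrow> real \<Rightarrow> ('a \<Rightarrow> real) \<Rightarrow> bool" where
  "ms_riemann_integral M Z a b X \<longleftrightarrow>
     X \<in> borel_measurable M \<and>
     (\<forall>e>0. \<exists>\<delta>>0. \<forall>D. D tagged_division_of {a..b} \<and> (\<lambda>x. ball x \<delta>) fine D \<longrightarrow>
        (\<integral>\<^sup>+ x. ennreal (((\<Sum>(t, K)\<in>D. Henstock_Kurzweil_Integration.content K * Z t x) - X x)\<^sup>2) \<partial>M) < ennreal e)"

text \<open>Mean-square integral over [0,1], taken in the (possibly improper) sense:
  L2-limit of the mean-square integrals over [a,b] as a -> 0+, b -> 1-
  (the kernel may be unbounded at the endpoints when kappa or mu is negative).\<close>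
definition ms_integral_01 ::
  "'a measure \<Rightarrow> (real \<Rightarrow> 'a \<Rightarrow> real) \<Rightarrow> ('a \<Rightarrow> real) \<Rightarrow> bool" where
  "ms_integral_01 M Z X \<longleftrightarrow>
     X \<in> borel_measurable M \<and>
     (\<forall>e>0. \<exists>\<delta>>0. \<forall>a b. 0 < a \<and> a < \<delta> \<and> 1 - \<delta> < b \<and> b < 1 \<longrightarrow>
        (\<exists>Y. ms_riemann_integral M Z a b Y) \<and>
        (\<forall>Y. ms_riemann_integral M Z a b Y \<longrightarrow>
              (\<integral>\<^sup>+ x. ennreal ((Y x - X x)\<^sup>2) \<partial>M) < ennreal e))"

definition jacobi_noise_error ::
  "'a measure \<Rightarrow> (real \<Rightarrow> 'a \<Rightarrow> real) \<Rightarrow> nat \<Rightarrow> nat \<Rightarrow> real \<Rightarrow> real \<Rightarrow> real \<Rightarrow> real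
   \<Rightarrow> real \<Rightarrow> real \<Rightarrow> ('a \<Rightarrow> real) \<Rightarrow> bool" where
  "jacobi_noise_error M w n N \<mu> \<kappa> \<xi> \<beta> T t0 X \<longleftrightarrow>
     ms_integral_01 M (\<lambda>\<tau> x. jacobi_kernel n N \<mu> \<kappa> \<xi> \<beta> T \<tau> * w (t0 + \<beta> * T * \<tau>) x) X"

definition noise_C1 :: "'a measure \<Rightarrow> (real \<Rightarrow> 'a \<Rightarrow> real) \<Rightarrow> bool" where
  "noise_C1 M w \<longleftrightarrow>
     (\<forall>\<tau>\<ge>0. w \<tau> \<in> borel_measurable M \<and> integrable M (\<lambda>x. (w \<tau> x)\<^sup>2)) \<and>
     continuous_on {0..} (\<lambda>\<tau>. mean M (w \<tau>)) \<and>
     continuous_on ({0..} \<times> {0..}) (\<lambda>(s, \<tau>). covar M (w s) (w \<tau>))"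

definition noise_C2 :: "'a measure \<Rightarrow> (real \<Rightarrow> 'a \<Rightarrow> real) \<Rightarrow> real set \<Rightarrow> nat \<Rightarrow> bool" where
  "noise_C2 M w I n \<longleftrightarrow>
     (\<exists>(\<nu>::nat \<Rightarrow> real) (k1::nat \<Rightarrow> nat) (\<eta>::nat \<Rightarrow> real) (\<eta>'::nat \<Rightarrow> real)
        (k2::nat \<Rightarrow> nat) (k3::nat \<Rightarrow> nat) (n1::nat) (n2::nat).
        min n1 n2 < n \<and>
        (\<forall>t0 s \<tau>. t0 + s \<in> I \<and> t0 + \<tau> \<in> I \<longrightarrow>
           mean M (w (t0 + \<tau>)) = (\<Sum>i<n. \<nu> i * t0 ^ k1 i * \<tau> ^ i) + mean M (w \<tau>) \<and>
           covar M (w (t0 + s)) (w (t0 + \<tau>)) =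
             (\<Sum>i\<le>n1. \<eta> i * t0 ^ k2 i * \<tau> ^ i) * (\<Sum>i\<le>n2. \<eta>' i * t0 ^ k3 i * s ^ i)
             + covar M (w s) (w \<tau>)))"

definition noise_C3 :: "'a measure \<Rightarrow> (real \<Rightarrow> 'a \<Rightarrow> real) \<Rightarrow> real set \<Rightarrow> nat \<Rightarrow> bool" where
  "noise_C3 M w I n \<longleftrightarrow>
     (\<exists>(\<nu>::nat \<Rightarrow> real) (\<eta>::nat \<Rightarrow> real) (\<eta>'::nat \<Rightarrow> real) (n1::nat) (n2::nat).
        min n1 n2 < n \<and>
        (\<forall>s\<in>I. \<forall>\<tau>\<in>I.
           mean M (w \<tau>) = (\<Sum>i<n. \<nu> i * \<tau> ^ i) \<and>
           covar M (w s) (w \<tau>) = (\<Sum>i\<le>n1. \<eta> i * \<tau> ^ i) * (\<Sum>i\<le>n2. \<eta>' i * s ^ i)))"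

end

theory Submission
  imports Defs "HOL-Computational_Algebra.Polynomial"
begin

hide_const (open) Polynomial.content

definition termf :: "real \<Rightarrow> real \<Rightarrow> real poly \<Rightarrow> nat \<Rightarrow> nat \<Rightarrow> real \<Rightarrow> real" where
  "termf A B p u v t = poly p t * t powr (B - real u) * (1 - t) powr (A - real v)"

inductive goodf :: "real \<Rightarrow> real \<Rightarrow> nat \<Rightarrow> (real \<Rightarrow> real) \<Rightarrow> bool" for A B where
  base: "u \<le> j \<Longrightarrow> v \<le> j \<Longrightarrow> goodf A B j (termf A B p u v)"
| add: "goodf A B j f \<Longrightarrow> goodf A B j g \<Longrightarrow> goodf A B j (\<lambda>t. f t + g t)"

lemma goodf_mono: "goodf A B j f \<Longrightarrow> j \<le> k \<Longrightarrow> goodf A B k f"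
  by (induction rule: goodf.induct) (auto intro: goodf.intros)

lemma termf_deriv:
  assumes t: "0 < t" "t < 1"
  shows "(termf A B p u v has_real_derivative
           termf A B (pderiv p) u v t + termf A B (smult (B - real u) p) (Suc u) v t
           + termf A B (smult (-(A - real v)) p) u (Suc v) t) (at t)"
proof -
  have "((\<lambda>t. poly p t * t powr (B - real u) * (1 - t) powr (A - real v)) has_real_derivative
     poly (pderiv p) t * t powr (B - real u) * (1 - t) powr (A - real v)
     + poly p t * ((B - real u) * t powr (B - real u - 1)) * (1 - t) powr (A - real v)
     + poly p t * t powr (B - real u) * ((A - real v) * (1 - t) powr (A - real v - 1) * (-1))) (at t)"
    using t
    by (auto intro!: derivative_eq_intros poly_DERIV simp: algebra_simps)
  then show ?thesis
    unfolding termf_def [abs_def]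
    by (simp add: algebra_simps diff_diff_eq)
qed

lemma goodf_deriv:
  "goodf A B j f \<Longrightarrow> \<exists>g. goodf A B (Suc j) g \<and> (\<forall>t\<in>{0<..<1}. (f has_real_derivative g t) (at t))"
proof (induction rule: goodf.induct)
  case (base u j v p)
  let ?g = "\<lambda>t. termf A B (pderiv p) u v t + termf A B (smult (B - real u) p) (Suc u) v t
           + termf A B (smult (-(A - real v)) p) u (Suc v) t"
  have "goodf A B (Suc j) ?g"
    using base by (intro goodf.intros) auto
  moreover have "\<forall>t\<in>{0<..<1}. (termf A B p u v has_real_derivative ?g t) (at t)"
    using termf_deriv by auto
  ultimately show ?case by blast
next
  case (add j f g)
  then obtain f' g' where "goodf A B (Suc j) f'" "goodf A B (Suc j) g'"
    "\<forall>t\<in>{0<..<1}. (f has_real_derivative f' t) (at t)"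
    "\<forall>t\<in>{0<..<1}. (g has_real_derivative g' t) (at t)" by blast
  then show ?case
    by (intro exI[of _ "\<lambda>t. f' t + g' t"]) (auto intro: goodf.intros derivative_intros)
qed

lemma termf_lim:
  assumes "real u < B" "real v < A"
  shows "(termf A B p u v \<longlongrightarrow> 0) (at_right 0)" "(termf A B p u v \<longlongrightarrow> 0) (at_left 1)"
proof -
  have ev0: "\<forall>\<^sub>F t in at_right 0. 0 \<le> (t::real)"
    by (rule eventually_at_rightI[of _ 1]) auto
  have "((\<lambda>t. poly p t * t powr (B - real u) * (1 - t) powr (A - real v)) \<longlongrightarrow>
          poly p 0 * 0 * (1 - 0) powr (A - real v)) (at_right 0)"
    using assms
    by (intro tendsto_intros tendsto_zero_powrI ev0) (auto intro!: tendsto_intros)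
  then show "(termf A B p u v \<longlongrightarrow> 0) (at_right 0)"
    by (simp add: termf_def [abs_def])
  have ev1: "\<forall>\<^sub>F t in at_left 1. 0 \<le> 1 - (t::real)"
    by (rule eventually_at_leftI[of 0]) auto
  have "((\<lambda>t. poly p t * t powr (B - real u) * (1 - t) powr (A - real v)) \<longlongrightarrow>
          poly p 1 * 1 powr (B - real u) * 0) (at_left 1)"
    using assms
    by (intro tendsto_intros tendsto_zero_powrI ev1) (auto intro!: tendsto_eq_intros)
  then show "(termf A B p u v \<longlongrightarrow> 0) (at_left 1)"
    by (simp add: termf_def [abs_def])
qed

lemma goodf_lim:
  "goodf A B j f \<Longrightarrow> real j < A \<Longrightarrow> real j < B \<Longrightarrow>
    (f \<longlongrightarrow> 0) (at_right 0) \<and> (f \<longlongrightarrow> 0) (at_left 1)"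
proof (induction rule: goodf.induct)
  case (base u j v p)
  then show ?case using termf_lim[of u B v A p] by auto
next
  case (add j f g)
  then show ?case using tendsto_add[of f 0 _ g 0] by auto
qed

lemma jacobiP_poly: "\<exists>p. \<forall>t. jacobiP a b k t = poly p t"
proof -
  let ?p = "\<Sum>s = 0..k. smult (((real k + a) gchoose s) * ((real k + b) gchoose (k - s)))
                   ([:-1, 1:] ^ (k - s) * [:0, 1:] ^ s)"
  show ?thesis
    by (intro exI[of _ ?p]) (simp add: jacobiP_def poly_sum poly_power algebra_simps)
qed

lemma goodf_F:
  "\<exists>p. (\<lambda>t. jweight A B t * jacobiP A B i t) = termf A B p 0 0"
proof -
  obtain p where "\<forall>t. jacobiP A B i t = poly p t" using jacobiP_poly by blast
  then show ?thesis
    by (intro exI[of _ p]) (auto simp: termf_def jweight_def fun_eq_iff)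
qed

lemma deriv_iter_good:
  assumes "goodf A B 0 F"
  shows "\<exists>g. goodf A B j g \<and> (\<forall>t\<in>{0<..<1}. (deriv ^^ j) F t = g t)"
proof (induction j)
  case 0
  then show ?case using assms by (intro exI[of _ F]) auto
next
  case (Suc j)
  then obtain g where g: "goodf A B j g" "\<forall>t\<in>{0<..<1}. (deriv ^^ j) F t = g t" by blast
  obtain g' where g': "goodf A B (Suc j) g'" "\<forall>t\<in>{0<..<1}. (g has_real_derivative g' t) (at t)"
    using goodf_deriv[OF g(1)] by blast
  have "(deriv ^^ Suc j) F t = g' t" if t: "t \<in> {0<..<1}" for t
  proof -
    have "((deriv ^^ j) F has_real_derivative g' t) (at t)"
      by (rule has_field_derivative_transform_within_open[OF g'(2)[rule_format, OF t] _ t])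
         (use g(2) in auto)
    then show ?thesis by (simp add: DERIV_imp_deriv)
  qed
  then show ?case using g' by blast
qed

lemma deriv_iter_has:
  assumes "goodf A B 0 F" "t \<in> {0<..<1}"
  shows "((deriv ^^ j) F has_real_derivative (deriv ^^ Suc j) F t) (at t)"
proof -
  obtain g where g: "goodf A B j g" "\<forall>t\<in>{0<..<1}. (deriv ^^ j) F t = g t"
    using deriv_iter_good[OF assms(1)] by blast
  obtain g' where g': "goodf A B (Suc j) g'" "\<forall>t\<in>{0<..<1}. (g has_real_derivative g' t) (at t)"
    using goodf_deriv[OF g(1)] by blast
  have "((deriv ^^ j) F has_real_derivative g' t) (at t)"
    by (rule has_field_derivative_transform_within_open[OF g'(2)[rule_format, OF assms(2)] _ assms(2)])
       (use g(2) in auto)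
  then show ?thesis by (simp add: DERIV_imp_deriv)
qed

lemma deriv_iter_lim:
  assumes "goodf A B 0 F" "real j < A" "real j < B"
  shows "((deriv ^^ j) F \<longlongrightarrow> 0) (at_right 0) \<and> ((deriv ^^ j) F \<longlongrightarrow> 0) (at_left 1)"
proof -
  obtain g where g: "goodf A B j g" "\<forall>t\<in>{0<..<1}. (deriv ^^ j) F t = g t"
    using deriv_iter_good[OF assms(1)] by blast
  have l: "(g \<longlongrightarrow> 0) (at_right 0)" "(g \<longlongrightarrow> 0) (at_left 1)"
    using goodf_lim[OF g(1) assms(2,3)] by auto
  have e0: "\<forall>\<^sub>F t in at_right 0. g t = (deriv ^^ j) F t"
    by (rule eventually_at_rightI[of _ 1]) (use g(2) in auto)
  have e1: "\<forall>\<^sub>F t in at_left 1. g t = (deriv ^^ j) F t"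
    by (rule eventually_at_leftI[of 0]) (use g(2) in auto)
  show ?thesis using tendsto_cong[OF e0] tendsto_cong[OF e1] l by auto
qed

lemma deriv_iter_cont:
  assumes "goodf A B 0 F"
  shows "continuous_on {0<..<1} ((deriv ^^ j) F)"
proof -
  have "isCont ((deriv ^^ j) F) t" if "t \<in> {0<..<1}" for t
    using deriv_iter_has[OF assms that] DERIV_isCont by blast
  then show ?thesis by (simp add: continuous_at_imp_continuous_on)
qed

definition Gfun :: "nat \<Rightarrow> (real \<Rightarrow> real) \<Rightarrow> real poly \<Rightarrow> real \<Rightarrow> real" where
  "Gfun n F q t = (\<Sum>k<n. (-1) ^ k * (deriv ^^ (n - 1 - k)) F t * poly ((pderiv ^^ k) q) t)"

lemma Gfun_deriv:
  assumes F: "goodf A B 0 F" and q: "(pderiv ^^ n) q = 0" and t: "t \<in> {0<..<1}"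
  shows "(Gfun n F q has_real_derivative (deriv ^^ n) F t * poly q t) (at t)"
proof -
  let ?T = "\<lambda>k. (-1) ^ k * (deriv ^^ (n - k)) F t * poly ((pderiv ^^ k) q) t"
  have d: "((\<lambda>t. (-1) ^ k * (deriv ^^ (n - 1 - k)) F t * poly ((pderiv ^^ k) q) t) has_real_derivative
           ?T k - ?T (Suc k)) (at t)" if k: "k < n" for k
  proof -
    have e: "Suc (n - 1 - k) = n - k" using k by simp
    have h1: "((deriv ^^ (n - 1 - k)) F has_real_derivative (deriv ^^ (n - k)) F t) (at t)"
      using deriv_iter_has[OF F t, of "n - 1 - k"] unfolding e .
    have h2: "((\<lambda>t. poly ((pderiv ^^ k) q) t) has_real_derivative poly ((pderiv ^^ Suc k) q) t) (at t)"
      using poly_DERIV[of "(pderiv ^^ k) q" t] by simp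
    have e2: "n - Suc k = n - 1 - k" by simp
    show ?thesis
      using DERIV_mult[OF DERIV_cmult[OF h1, of "(-1)^k"] h2]
      unfolding e2 by (simp add: field_simps)
  qed
  have "(Gfun n F q has_real_derivative (\<Sum>k<n. ?T k - ?T (Suc k))) (at t)"
    unfolding Gfun_def[abs_def] by (rule DERIV_sum) (use d in auto)
  moreover have "(\<Sum>k<n. ?T k - ?T (Suc k)) = (deriv ^^ n) F t * poly q t"
    by (subst sum_lessThan_telescope') (simp only: q poly_0 mult_zero_right diff_zero power_0 mult_1 funpow_0)
  ultimately show ?thesis by simp
qed

lemma Gfun_lim:
  assumes F: "goodf A B 0 F" and AB: "\<And>j. j < n \<Longrightarrow> real j < A \<and> real j < B"
  shows "(Gfun n F q \<longlongrightarrow> 0) (at_right 0) \<and> (Gfun n F q \<longlongrightarrow> 0) (at_left 1)"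
proof -
  have l: "((deriv ^^ (n - 1 - k)) F \<longlongrightarrow> 0) (at_right 0) \<and> ((deriv ^^ (n - 1 - k)) F \<longlongrightarrow> 0) (at_left 1)"
    if "k < n" for k
    using deriv_iter_lim[OF F, of "n - 1 - k"] AB[of "n - 1 - k"] that by auto
  have "((\<lambda>t. \<Sum>k<n. (-1) ^ k * (deriv ^^ (n - 1 - k)) F t * poly ((pderiv ^^ k) q) t) \<longlongrightarrow>
          (\<Sum>k<n. (-1) ^ k * 0 * poly ((pderiv ^^ k) q) 0)) (at_right 0)"
    by (intro tendsto_sum tendsto_mult tendsto_const tendsto_poly) (use l in auto)
  moreover have "((\<lambda>t. \<Sum>k<n. (-1) ^ k * (deriv ^^ (n - 1 - k)) F t * poly ((pderiv ^^ k) q) t) \<longlongrightarrow>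
          (\<Sum>k<n. (-1) ^ k * 0 * poly ((pderiv ^^ k) q) 1)) (at_left 1)"
    by (intro tendsto_sum tendsto_mult tendsto_const tendsto_poly) (use l in auto)
  ultimately show ?thesis unfolding Gfun_def[abs_def] by simp
qed

lemma Gfun_integral:
  assumes F: "goodf A B 0 F" and q: "(pderiv ^^ n) q = 0" and ab: "0 < a" "a \<le> b" "b < 1"
  shows "((\<lambda>t. (deriv ^^ n) F t * poly q t) has_integral Gfun n F q b - Gfun n F q a) {a..b}"
proof (rule fundamental_theorem_of_calculus[OF ab(2)])
  fix x assume "x \<in> {a..b}"
  then have "x \<in> {0<..<1}" using ab by auto
  from Gfun_deriv[OF F q this] show "(Gfun n F q has_vector_derivative (deriv ^^ n) F x * poly q x) (at x within {a..b})"
    by (simp add: has_real_derivative_iff_has_vector_derivative has_vector_derivative_at_within)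
qed

definition GK :: "nat \<Rightarrow> nat \<Rightarrow> real \<Rightarrow> real \<Rightarrow> real \<Rightarrow> real \<Rightarrow> real \<Rightarrow> real poly \<Rightarrow> real \<Rightarrow> real" where
  "GK n N \<mu> \<kappa> \<xi> \<beta> T q \<tau> =
     (-1) ^ n / (\<beta> * T) ^ n *
     (\<Sum>i = 0..N - n.
        jacobiP (\<mu> + real n) (\<kappa> + real n) i \<xi> / jnorm2 (\<mu> + real n) (\<kappa> + real n) i
        * Gfun n (\<lambda>t. jweight (\<mu> + real n) (\<kappa> + real n) t
                              * jacobiP (\<mu> + real n) (\<kappa> + real n) i t) q \<tau>)"

lemma goodf_Fi: "goodf A B 0 (\<lambda>t. jweight A B t * jacobiP A B i t)"
proof -
  obtain p where "(\<lambda>t. jweight A B t * jacobiP A B i t) = termf A B p 0 0" using goodf_F by blast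
  then show ?thesis by (simp add: goodf.base)
qed

lemma kernel_ibp:
  assumes "\<kappa> > -1" "\<mu> > -1" and q: "(pderiv ^^ n) q = 0"
  shows "(GK n N \<mu> \<kappa> \<xi> \<beta> T q \<longlongrightarrow> 0) (at_right 0) \<and> (GK n N \<mu> \<kappa> \<xi> \<beta> T q \<longlongrightarrow> 0) (at_left 1)
     \<and> (\<forall>a b. 0 < a \<longrightarrow> a \<le> b \<longrightarrow> b < 1 \<longrightarrow>
          ((\<lambda>\<tau>. jacobi_kernel n N \<mu> \<kappa> \<xi> \<beta> T \<tau> * poly q \<tau>) has_integral
            GK n N \<mu> \<kappa> \<xi> \<beta> T q b - GK n N \<mu> \<kappa> \<xi> \<beta> T q a) {a..b})"
proof -
  define A where "A = \<mu> + real n"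
  define B where "B = \<kappa> + real n"
  define c where "c i = jacobiP A B i \<xi> / jnorm2 A B i" for i
  define F where "F i = (\<lambda>t. jweight A B t * jacobiP A B i t)" for i
  define C where "C = (-1) ^ n / (\<beta> * T) ^ n"
  have GK: "GK n N \<mu> \<kappa> \<xi> \<beta> T q = (\<lambda>\<tau>. C * (\<Sum>i = 0..N - n. c i * Gfun n (F i) q \<tau>))"
    by (simp add: GK_def fun_eq_iff A_def B_def c_def F_def C_def)
  have K: "jacobi_kernel n N \<mu> \<kappa> \<xi> \<beta> T \<tau> * poly q \<tau> =
      C * (\<Sum>i = 0..N - n. c i * ((deriv ^^ n) (F i) \<tau> * poly q \<tau>))" for \<tau>
    unfolding jacobi_kernel_def C_def c_def F_def A_def B_def by (simp only: sum_distrib_right mult.assoc)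
  have Fg: "goodf A B 0 (F i)" for i unfolding F_def by (rule goodf_Fi)
  have AB: "real j < A \<and> real j < B" if "j < n" for j
    using assms that by (auto simp: A_def B_def)
  have lim: "(Gfun n (F i) q \<longlongrightarrow> 0) (at_right 0) \<and> (Gfun n (F i) q \<longlongrightarrow> 0) (at_left 1)" for i
    using Gfun_lim[OF Fg AB] by blast
  have l1: "((\<lambda>\<tau>. C * (\<Sum>i = 0..N - n. c i * Gfun n (F i) q \<tau>)) \<longlongrightarrow> C * (\<Sum>i = 0..N - n. c i * 0)) (at_right 0)"
    by (intro tendsto_intros) (use lim in auto)
  have l2: "((\<lambda>\<tau>. C * (\<Sum>i = 0..N - n. c i * Gfun n (F i) q \<tau>)) \<longlongrightarrow> C * (\<Sum>i = 0..N - n. c i * 0)) (at_left 1)"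
    by (intro tendsto_intros) (use lim in auto)
  have I: "((\<lambda>\<tau>. jacobi_kernel n N \<mu> \<kappa> \<xi> \<beta> T \<tau> * poly q \<tau>) has_integral
            GK n N \<mu> \<kappa> \<xi> \<beta> T q b - GK n N \<mu> \<kappa> \<xi> \<beta> T q a) {a..b}"
    if ab: "0 < a" "a \<le> b" "b < 1" for a b
  proof -
    have "((\<lambda>\<tau>. C * (\<Sum>i = 0..N - n. c i * ((deriv ^^ n) (F i) \<tau> * poly q \<tau>))) has_integral
           C * (\<Sum>i = 0..N - n. c i * (Gfun n (F i) q b - Gfun n (F i) q a))) {a..b}"
      by (intro has_integral_mult_right has_integral_sum finite_atLeastAtMost)
         (rule Gfun_integral[OF Fg q ab])
    then show ?thesis
      unfolding K GK by (simp add: algebra_simps sum_subtractf)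
  qed
  show ?thesis using l1 l2 I unfolding GK by simp
qed



lemma riemann_cont:
  fixes f :: "real \<Rightarrow> real"
  assumes cf: "continuous_on {a..b} f" and e: "e > 0"
  shows "\<exists>\<delta>>0. \<forall>D. D tagged_division_of {a..b} \<and> (\<lambda>x. ball x \<delta>) fine D \<longrightarrow>
           \<bar>(\<Sum>(t, K)\<in>D. content K * f t) - integral {a..b} f\<bar> \<le> e"
proof -
  define e' where "e' = e / (content {a..b} + 1)"
  have cpos: "content {a..b} \<ge> 0" by simp
  have e': "e' > 0" using e cpos by (simp add: e'_def)
  obtain \<delta> where \<delta>: "\<delta> > 0" and d: "\<And>x x'. x \<in> {a..b} \<Longrightarrow> x' \<in> {a..b} \<Longrightarrow> dist x' x < \<delta> \<Longrightarrow> dist (f x') (f x) < e'"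
    using compact_uniformly_continuous[OF cf compact_Icc] e' unfolding uniformly_continuous_on_def by metis
  show ?thesis
  proof (intro exI[of _ \<delta>] conjI allI impI)
    show "\<delta> > 0" by fact
    fix D assume D: "D tagged_division_of {a..b} \<and> (\<lambda>x. ball x \<delta>) fine D"
    then have Dc: "D tagged_division_of cbox a b" by simp
    have fi: "f integrable_on cbox a b" using cf by (simp add: integrable_continuous_real)
    have int: "integral {a..b} f = (\<Sum>(t, K)\<in>D. integral K f)"
      using integral_combine_tagged_division_topdown[OF fi Dc] by simp
    have fin: "finite D" using D tagged_division_of_finite by blast
    have each: "\<bar>content K * f t - integral K f\<bar> \<le> e' * content K" if tK: "(t, K) \<in> D" for t K
    proof -
      obtain u v where K: "K = cbox u v" using tagged_division_ofD(4)[OF Dc tK] by blast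
      have tK': "t \<in> K" "K \<subseteq> cbox a b" using tagged_division_ofD(2,3)[OF Dc tK] by auto
      have Kb: "K \<subseteq> ball t \<delta>" using D tK by (auto simp: fine_def)
      have fK: "(f has_integral integral K f) K"
        using integrable_on_subcbox[OF fi] tK'(2) K by (metis integrable_integral)
      have cK: "((\<lambda>y. f t) has_integral content K * f t) K"
        using has_integral_const_real[of "f t" u v] K by simp
      have hd: "((\<lambda>y. f t - f y) has_integral content K * f t - integral K f) (cbox u v)"
        using has_integral_diff[OF cK fK] K by simp
      have "norm (content K * f t - integral K f) \<le> e' * content (cbox u v)"
      proof (rule has_integral_bound[OF _ hd])
        show "0 \<le> e'" using e' by simp
        fix y assume y: "y \<in> cbox u v"
        then have "y \<in> {a..b}" "t \<in> {a..b}" "dist y t < \<delta>" using tK' Kb K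
          by (auto simp: dist_commute subset_iff)
        then show "norm (f t - f y) \<le> e'"
          using d[of t y] by (simp add: dist_real_def abs_minus_commute)
      qed
      then show ?thesis using K by simp
    qed
    have "\<bar>(\<Sum>(t, K)\<in>D. content K * f t) - integral {a..b} f\<bar> =
          \<bar>\<Sum>(t, K)\<in>D. content K * f t - integral K f\<bar>"
      by (simp add: int sum_subtractf case_prod_unfold)
    also have "\<dots> \<le> (\<Sum>(t, K)\<in>D. \<bar>content K * f t - integral K f\<bar>)"
      by (rule order_trans[OF sum_abs]) (simp add: case_prod_unfold)
    also have "\<dots> \<le> (\<Sum>(t, K)\<in>D. e' * content K)"
      by (rule sum_mono) (use each in auto)
    also have "\<dots> = e' * content {a..b}"
      using additive_content_tagged_division[OF Dc]
      by (simp add: sum_distrib_left[symmetric] case_prod_unfold del: content_real_if)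
    also have "\<dots> \<le> e"
      using e cpos by (simp add: e'_def field_simps)
    finally show "\<bar>(\<Sum>(t, K)\<in>D. content K * f t) - integral {a..b} f\<bar> \<le> e" .
  qed
qed

definition L2n :: "'a measure \<Rightarrow> ('a \<Rightarrow> real) \<Rightarrow> ennreal" where
  "L2n M f = (\<integral>\<^sup>+ x. ennreal ((f x)\<^sup>2) \<partial>M)"

lemma L2n_add:
  assumes [measurable]: "f \<in> borel_measurable M" "g \<in> borel_measurable M"
  shows "L2n M (\<lambda>x. f x + g x) \<le> 2 * L2n M f + 2 * L2n M g"
proof -
  have "L2n M (\<lambda>x. f x + g x) \<le> (\<integral>\<^sup>+ x. (2 * ennreal ((f x)\<^sup>2) + 2 * ennreal ((g x)\<^sup>2)) \<partial>M)"
    unfolding L2n_def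
  proof (rule nn_integral_mono)
    fix x
    have "(f x + g x)\<^sup>2 \<le> 2 * (f x)\<^sup>2 + 2 * (g x)\<^sup>2"
      using sum_squares_ge_zero[of "f x - g x" 0] by (simp add: power2_eq_square algebra_simps)
    then have "ennreal ((f x + g x)\<^sup>2) \<le> ennreal (2 * (f x)\<^sup>2 + 2 * (g x)\<^sup>2)"
      by (rule ennreal_leI)
    also have "\<dots> = 2 * ennreal ((f x)\<^sup>2) + 2 * ennreal ((g x)\<^sup>2)"
      by (simp add: ennreal_mult ennreal_plus)
    finally show "ennreal ((f x + g x)\<^sup>2) \<le> 2 * ennreal ((f x)\<^sup>2) + 2 * ennreal ((g x)\<^sup>2)" .
  qed
  also have "\<dots> = 2 * L2n M f + 2 * L2n M g"
    unfolding L2n_def by (simp add: nn_integral_add nn_integral_cmult)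
  finally show ?thesis .
qed

lemma L2n_cong: "AE x in M. f x = g x \<Longrightarrow> L2n M f = L2n M g"
  unfolding L2n_def by (rule nn_integral_cong_AE) auto

lemma L2n_zero:
  assumes [measurable]: "f \<in> borel_measurable M" and "L2n M f = 0"
  shows "AE x in M. f x = 0"
proof -
  have "AE x in M. ennreal ((f x)\<^sup>2) = 0"
    using assms(2) unfolding L2n_def by (subst (asm) nn_integral_0_iff_AE) auto
  then show ?thesis by eventually_elim simp
qed

lemma L2n_lin:
  assumes "prob_space M" and [measurable]: "U \<in> borel_measurable M" and u: "L2n M U = ennreal u" "u \<ge> 0"
  shows "L2n M (\<lambda>x. \<alpha> + \<beta> * U x) \<le> ennreal (2 * \<alpha>\<^sup>2 + 2 * \<beta>\<^sup>2 * u)"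
proof -
  have "L2n M (\<lambda>x. \<alpha> + \<beta> * U x) \<le> 2 * L2n M (\<lambda>x. \<alpha>) + 2 * L2n M (\<lambda>x. \<beta> * U x)"
    by (rule L2n_add) auto
  also have "L2n M (\<lambda>x. \<alpha>) = ennreal (\<alpha>\<^sup>2)"
    using prob_space.emeasure_space_1[OF assms(1)] by (simp add: L2n_def)
  also have "L2n M (\<lambda>x. \<beta> * U x) = ennreal (\<beta>\<^sup>2) * ennreal u"
  proof -
    have "L2n M (\<lambda>x. \<beta> * U x) = (\<integral>\<^sup>+ x. ennreal (\<beta>\<^sup>2) * ennreal ((U x)\<^sup>2) \<partial>M)"
      unfolding L2n_def by (simp add: power_mult_distrib ennreal_mult)
    also have "\<dots> = ennreal (\<beta>\<^sup>2) * L2n M U"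
      unfolding L2n_def by (simp add: nn_integral_cmult)
    finally show ?thesis using u by simp
  qed
  also have "2 * ennreal (\<alpha>\<^sup>2) + 2 * (ennreal (\<beta>\<^sup>2) * ennreal u) = ennreal (2 * \<alpha>\<^sup>2 + 2 * \<beta>\<^sup>2 * u)"
    using u(2) by (simp add: ennreal_mult ennreal_plus mult.assoc)
  finally show ?thesis .
qed

lemma eps_zero:
  fixes Z :: ennreal
  assumes u: "u \<ge> 0" and b: "\<And>\<epsilon>. 0 < \<epsilon> \<Longrightarrow> \<epsilon> \<le> 1 \<Longrightarrow> Z \<le> ennreal (2 * \<epsilon> + 4 * \<epsilon>\<^sup>2 * (1 + u))"
  shows "Z = 0"
proof -
  have "Z \<le> 0"
  proof (rule ennreal_le_epsilon)
    fix e :: real assume e: "0 < e"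
    define \<epsilon> where "\<epsilon> = min 1 (e / (6 + 4 * u))"
    have pos: "0 < \<epsilon>" "\<epsilon> \<le> 1" using e u by (auto simp: \<epsilon>_def)
    have "\<epsilon>\<^sup>2 \<le> \<epsilon>" using pos by (simp add: power2_eq_square mult_le_cancel_left1)
    then have "2 * \<epsilon> + 4 * \<epsilon>\<^sup>2 * (1 + u) \<le> 2 * \<epsilon> + 4 * \<epsilon> * (1 + u)"
      using u by (intro add_left_mono mult_right_mono) auto
    also have "\<dots> = \<epsilon> * (6 + 4 * u)" by (simp add: algebra_simps)
    also have "\<dots> \<le> e / (6 + 4 * u) * (6 + 4 * u)"
      using u by (intro mult_right_mono) (auto simp: \<epsilon>_def)
    also have "\<dots> = e" using u by simp
    finally have "Z \<le> ennreal e" using b[OF pos] order_trans ennreal_leI by blast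
    then show "Z \<le> 0 + ennreal e" by simp
  qed
  then show ?thesis by simp
qed

lemma fine_ball_mono: "(\<lambda>x. ball x \<delta>) fine D \<Longrightarrow> \<delta> \<le> \<delta>' \<Longrightarrow> (\<lambda>x. ball x \<delta>') fine D"
  unfolding fine_def by fastforce

lemma sq_le_of_abs: "\<bar>x::real\<bar> \<le> e \<Longrightarrow> x\<^sup>2 \<le> e\<^sup>2"
  using power_mono[of "\<bar>x\<bar>" e 2] by simp

lemma step1:
  assumes P: "prob_space M"
    and Wm: "\<And>t. t \<in> {0..1} \<Longrightarrow> W t \<in> borel_measurable M"
    and Um[measurable]: "U \<in> borel_measurable M" and u: "L2n M U = ennreal u" "u \<ge> 0"
    and dec: "\<And>t. t \<in> {0..1} \<Longrightarrow> AE x in M. W t x = \<phi> t + \<psi> t * U x"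
    and c1: "continuous_on {a..b} (\<lambda>t. k t * \<phi> t)" and c2: "continuous_on {a..b} (\<lambda>t. k t * \<psi> t)"
    and ab: "0 \<le> a" "b \<le> 1"
    and Y: "ms_riemann_integral M (\<lambda>\<tau> x. k \<tau> * W \<tau> x) a b Y"
  shows "AE x in M. Y x = integral {a..b} (\<lambda>t. k t * \<phi> t) + integral {a..b} (\<lambda>t. k t * \<psi> t) * U x"
proof -
  define A where "A = integral {a..b} (\<lambda>t. k t * \<phi> t)"
  define B where "B = integral {a..b} (\<lambda>t. k t * \<psi> t)"
  have Ym[measurable]: "Y \<in> borel_measurable M" using Y by (simp add: ms_riemann_integral_def)
  define Z where "Z x = Y x - (A + B * U x)" for x
  have Zm[measurable]: "Z \<in> borel_measurable M" unfolding Z_def by measurable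
  have "L2n M Z = 0"
  proof (rule eps_zero[OF u(2)])
    fix \<epsilon> :: real assume \<epsilon>: "0 < \<epsilon>" "\<epsilon> \<le> 1"
    obtain \<delta>1 where \<delta>1: "\<delta>1 > 0" "\<And>D. D tagged_division_of {a..b} \<and> (\<lambda>x. ball x \<delta>1) fine D \<Longrightarrow>
           \<bar>(\<Sum>(t, K)\<in>D. content K * (k t * \<phi> t)) - A\<bar> \<le> \<epsilon>"
      using riemann_cont[OF c1 \<epsilon>(1)] unfolding A_def by blast
    obtain \<delta>2 where \<delta>2: "\<delta>2 > 0" "\<And>D. D tagged_division_of {a..b} \<and> (\<lambda>x. ball x \<delta>2) fine D \<Longrightarrow>
           \<bar>(\<Sum>(t, K)\<in>D. content K * (k t * \<psi> t)) - B\<bar> \<le> \<epsilon>"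
      using riemann_cont[OF c2 \<epsilon>(1)] unfolding B_def by blast
    obtain \<delta>3 where \<delta>3: "\<delta>3 > 0" "\<And>D. D tagged_division_of {a..b} \<and> (\<lambda>x. ball x \<delta>3) fine D \<Longrightarrow>
        (\<integral>\<^sup>+ x. ennreal (((\<Sum>(t, K)\<in>D. content K * (k t * W t x)) - Y x)\<^sup>2) \<partial>M) < ennreal \<epsilon>"
      using Y \<epsilon>(1) unfolding ms_riemann_integral_def by blast
    define \<delta> where "\<delta> = min \<delta>1 (min \<delta>2 \<delta>3)"
    have "\<delta> > 0" using \<delta>1 \<delta>2 \<delta>3 by (simp add: \<delta>_def)
    obtain D where D: "D tagged_division_of {a..b}" "(\<lambda>x. ball x \<delta>) fine D"
      using fine_division_exists_real[OF gauge_ball[OF \<open>\<delta> > 0\<close>]] by blast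
    have fin: "finite D" using D(1) tagged_division_of_finite by blast
    have tags: "t \<in> {0..1}" if "(t, K) \<in> D" for t K
      using tagged_division_ofD(2,3)[OF D(1) that] ab by auto
    define R1 where "R1 = (\<Sum>(t, K)\<in>D. content K * (k t * \<phi> t))"
    define R2 where "R2 = (\<Sum>(t, K)\<in>D. content K * (k t * \<psi> t))"
    define S where "S x = (\<Sum>(t, K)\<in>D. content K * (k t * W t x))" for x
    have r1: "\<bar>R1 - A\<bar> \<le> \<epsilon>" unfolding R1_def
      by (rule \<delta>1(2)) (use D fine_ball_mono[of \<delta> D \<delta>1] in \<open>auto simp: \<delta>_def\<close>)
    have r2: "\<bar>R2 - B\<bar> \<le> \<epsilon>" unfolding R2_def
      by (rule \<delta>2(2)) (use D fine_ball_mono[of \<delta> D \<delta>2] in \<open>auto simp: \<delta>_def\<close>)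
    have r3: "(\<integral>\<^sup>+ x. ennreal ((S x - Y x)\<^sup>2) \<partial>M) < ennreal \<epsilon>" unfolding S_def
      by (rule \<delta>3(2)) (use D fine_ball_mono[of \<delta> D \<delta>3] in \<open>auto simp: \<delta>_def\<close>)
    have Sm[measurable]: "S \<in> borel_measurable M"
      unfolding S_def case_prod_unfold
      by (intro borel_measurable_sum borel_measurable_times borel_measurable_const)
         (use Wm tags in \<open>auto simp: case_prod_unfold\<close>)
    have AES: "AE x in M. S x = R1 + R2 * U x"
    proof -
      have "AE x in M. \<forall>p\<in>D. W (fst p) x = \<phi> (fst p) + \<psi> (fst p) * U x"
        by (rule AE_finite_allI[OF fin]) (use dec tags in \<open>auto simp: case_prod_unfold\<close>)
      then show ?thesis
      proof eventually_elim
        case (elim x)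
        then have "S x = (\<Sum>p\<in>D. content (snd p) * (k (fst p) * (\<phi> (fst p) + \<psi> (fst p) * U x)))"
          unfolding S_def case_prod_unfold by (intro sum.cong) auto
        also have "\<dots> = R1 + R2 * U x"
          unfolding R1_def R2_def case_prod_unfold
          by (simp add: sum.distrib sum_distrib_right sum_distrib_left algebra_simps)
        finally show ?case .
      qed
    qed
    have "L2n M Z = L2n M (\<lambda>x. (Y x - S x) + (S x - (A + B * U x)))"
      unfolding Z_def by (simp add: algebra_simps)
    also have "\<dots> \<le> 2 * L2n M (\<lambda>x. Y x - S x) + 2 * L2n M (\<lambda>x. S x - (A + B * U x))"
      by (rule L2n_add) auto
    also have "L2n M (\<lambda>x. Y x - S x) \<le> ennreal \<epsilon>"
      using r3 unfolding L2n_def by (simp add: power2_commute)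
    also have "L2n M (\<lambda>x. S x - (A + B * U x)) = L2n M (\<lambda>x. (R1 - A) + (R2 - B) * U x)"
      by (rule L2n_cong) (use AES in \<open>auto simp: algebra_simps\<close>)
    also have "\<dots> \<le> ennreal (2 * (R1 - A)\<^sup>2 + 2 * (R2 - B)\<^sup>2 * u)"
      by (rule L2n_lin[OF P Um u])
    also have "\<dots> \<le> ennreal (2 * \<epsilon>\<^sup>2 + 2 * \<epsilon>\<^sup>2 * u)"
      using sq_le_of_abs[OF r1] sq_le_of_abs[OF r2] u(2)
      by (intro ennreal_leI add_mono mult_left_mono mult_right_mono) auto
    also have "2 * ennreal \<epsilon> + 2 * ennreal (2 * \<epsilon>\<^sup>2 + 2 * \<epsilon>\<^sup>2 * u) = ennreal (2 * \<epsilon> + 4 * \<epsilon>\<^sup>2 * (1 + u))"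
      using \<epsilon> u(2) by (simp add: ennreal_mult ennreal_plus[symmetric] algebra_simps)
    finally show "L2n M Z \<le> ennreal (2 * \<epsilon> + 4 * \<epsilon>\<^sup>2 * (1 + u))"
      by (simp add: add_mono mult_left_mono)
  qed
  then have "AE x in M. Z x = 0" by (rule L2n_zero[OF Zm])
  then show ?thesis by eventually_elim (simp add: Z_def A_def B_def)
qed

lemma step2:
  assumes P: "prob_space M"
    and Wm: "\<And>t. t \<in> {0..1} \<Longrightarrow> W t \<in> borel_measurable M"
    and Um[measurable]: "U \<in> borel_measurable M" and u: "L2n M U = ennreal u" "u \<ge> 0"
    and dec: "\<And>t. t \<in> {0..1} \<Longrightarrow> AE x in M. W t x = \<phi> t + \<psi> t * U x"
    and c1: "continuous_on {0<..<1} (\<lambda>t. k t * \<phi> t)" and c2: "continuous_on {0<..<1} (\<lambda>t. k t * \<psi> t)"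
    and IA: "\<And>e. e > 0 \<Longrightarrow> \<exists>\<delta>>0. \<forall>a b. 0 < a \<and> a < \<delta> \<and> 1 - \<delta> < b \<and> b < 1 \<longrightarrow>
               \<bar>integral {a..b} (\<lambda>t. k t * \<phi> t)\<bar> \<le> e \<and> \<bar>integral {a..b} (\<lambda>t. k t * \<psi> t)\<bar> \<le> e"
    and X: "ms_integral_01 M (\<lambda>\<tau> x. k \<tau> * W \<tau> x) X"
  shows "AE x in M. X x = 0"
proof -
  have Xm[measurable]: "X \<in> borel_measurable M" using X by (simp add: ms_integral_01_def)
  have "L2n M X = 0"
  proof (rule eps_zero[OF u(2)])
    fix \<epsilon> :: real assume \<epsilon>: "0 < \<epsilon>" "\<epsilon> \<le> 1"
    obtain \<delta>0 where \<delta>0: "\<delta>0 > 0" "\<And>a b. 0 < a \<and> a < \<delta>0 \<and> 1 - \<delta>0 < b \<and> b < 1 \<Longrightarrow>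
        (\<exists>Y. ms_riemann_integral M (\<lambda>\<tau> x. k \<tau> * W \<tau> x) a b Y) \<and>
        (\<forall>Y. ms_riemann_integral M (\<lambda>\<tau> x. k \<tau> * W \<tau> x) a b Y \<longrightarrow>
              (\<integral>\<^sup>+ x. ennreal ((Y x - X x)\<^sup>2) \<partial>M) < ennreal \<epsilon>)"
      using X \<epsilon>(1) unfolding ms_integral_01_def by blast
    obtain \<delta>1 where \<delta>1: "\<delta>1 > 0" "\<And>a b. 0 < a \<and> a < \<delta>1 \<and> 1 - \<delta>1 < b \<and> b < 1 \<Longrightarrow>
               \<bar>integral {a..b} (\<lambda>t. k t * \<phi> t)\<bar> \<le> \<epsilon> \<and> \<bar>integral {a..b} (\<lambda>t. k t * \<psi> t)\<bar> \<le> \<epsilon>"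
      using IA[OF \<epsilon>(1)] by blast
    define a where "a = min \<delta>0 \<delta>1 / 2"
    define b where "b = 1 - a"
    have ab: "0 < a" "a < \<delta>0" "1 - \<delta>0 < b" "b < 1" "a < \<delta>1" "1 - \<delta>1 < b"
      using \<delta>0(1) \<delta>1(1) by (auto simp: a_def b_def)
    obtain Y where Y: "ms_riemann_integral M (\<lambda>\<tau> x. k \<tau> * W \<tau> x) a b Y"
      using \<delta>0(2)[of a b] ab by blast
    have YX: "(\<integral>\<^sup>+ x. ennreal ((Y x - X x)\<^sup>2) \<partial>M) < ennreal \<epsilon>"
      using \<delta>0(2)[of a b] ab Y by blast
    have Ym[measurable]: "Y \<in> borel_measurable M" using Y by (simp add: ms_riemann_integral_def)
    define A where "A = integral {a..b} (\<lambda>t. k t * \<phi> t)"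
    define B where "B = integral {a..b} (\<lambda>t. k t * \<psi> t)"
    have AB: "\<bar>A\<bar> \<le> \<epsilon>" "\<bar>B\<bar> \<le> \<epsilon>" using \<delta>1(2)[of a b] ab by (auto simp: A_def B_def)
    have sub: "{a..b} \<subseteq> {0<..<1}" using ab by auto
    have AEY: "AE x in M. Y x = A + B * U x"
      unfolding A_def B_def
      by (rule step1[OF P Wm Um u dec continuous_on_subset[OF c1 sub] continuous_on_subset[OF c2 sub] _ _ Y])
         (use ab in auto)
    have "L2n M X = L2n M (\<lambda>x. (X x - Y x) + Y x)" by simp
    also have "\<dots> \<le> 2 * L2n M (\<lambda>x. X x - Y x) + 2 * L2n M Y"
      by (rule L2n_add) auto
    also have "L2n M (\<lambda>x. X x - Y x) \<le> ennreal \<epsilon>"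
      using YX unfolding L2n_def by (simp add: power2_commute)
    also have "L2n M Y = L2n M (\<lambda>x. A + B * U x)"
      by (rule L2n_cong) (use AEY in auto)
    also have "\<dots> \<le> ennreal (2 * A\<^sup>2 + 2 * B\<^sup>2 * u)"
      by (rule L2n_lin[OF P Um u])
    also have "\<dots> \<le> ennreal (2 * \<epsilon>\<^sup>2 + 2 * \<epsilon>\<^sup>2 * u)"
      using sq_le_of_abs[OF AB(1)] sq_le_of_abs[OF AB(2)] u(2)
      by (intro ennreal_leI add_mono mult_left_mono mult_right_mono) auto
    also have "2 * ennreal \<epsilon> + 2 * ennreal (2 * \<epsilon>\<^sup>2 + 2 * \<epsilon>\<^sup>2 * u) = ennreal (2 * \<epsilon> + 4 * \<epsilon>\<^sup>2 * (1 + u))"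
      using \<epsilon> u(2) by (simp add: ennreal_mult ennreal_plus[symmetric] algebra_simps)
    finally show "L2n M X \<le> ennreal (2 * \<epsilon> + 4 * \<epsilon>\<^sup>2 * (1 + u))"
      by (simp add: add_mono mult_left_mono)
  qed
  then show ?thesis by (rule L2n_zero[OF Xm])
qed

lemma kernel_cont: "continuous_on {0<..<1} (jacobi_kernel n N \<mu> \<kappa> \<xi> \<beta> T)"
  unfolding jacobi_kernel_def[abs_def]
  by (intro continuous_intros deriv_iter_cont[OF goodf_Fi])

lemma pderiv_iter_zero: "degree q < m \<or> q = 0 \<Longrightarrow> (pderiv ^^ m) (q :: real poly) = 0"
proof (induction m arbitrary: q)
  case 0
  then show ?case by simp
next
  case (Suc m)
  have "(pderiv ^^ Suc m) q = (pderiv ^^ m) (pderiv q)" by (simp only: funpow_Suc_right comp_apply)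
  also have "\<dots> = 0"
  proof (cases "degree q = 0")
    case True
    then have "pderiv q = 0" by (simp add: pderiv_eq_0_iff)
    then show ?thesis using Suc.IH[of 0] by simp
  next
    case False
    then have "degree (pderiv q) < m" using Suc.prems by (auto simp: degree_pderiv)
    then show ?thesis using Suc.IH by blast
  qed
  finally show ?case .
qed

lemma pderiv_iter_mono: "(pderiv ^^ m) (q :: real poly) = 0 \<Longrightarrow> m \<le> n \<Longrightarrow> (pderiv ^^ n) q = 0"
proof -
  assume a: "(pderiv ^^ m) q = 0" "m \<le> n"
  have "(pderiv ^^ n) q = (pderiv ^^ (n - m)) ((pderiv ^^ m) q)"
    using a(2) by (metis funpow_add le_add_diff_inverse2 o_apply)
  also have "\<dots> = 0" using a(1) pderiv_iter_zero[of 0 "n - m"] by simp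
  finally show ?thesis .
qed

lemma poly_affine_sum:
  fixes c :: "nat \<Rightarrow> real" and x0 d :: real
  shows  "\<exists>q. (\<forall>\<tau>. (\<Sum>i<m. c i * (x0 + d * \<tau>) ^ i) = poly q \<tau>) \<and> (pderiv ^^ m) q = 0"
proof -
  define q where "q = (\<Sum>i<m. smult (c i) ([:x0, d:] ^ i))"
  have ev: "(\<Sum>i<m. c i * (x0 + d * \<tau>) ^ i) = poly q \<tau>" for \<tau>
    by (simp add: q_def poly_sum poly_power algebra_simps)
  have "(pderiv ^^ m) q = 0"
  proof (cases m)
    case 0
    then show ?thesis by (simp add: q_def)
  next
    case (Suc m')
    have "degree q \<le> m'"
      unfolding q_def
    proof (rule degree_sum_le)
      fix i assume "i \<in> {..<m}"
      then have i: "i \<le> m'" using Suc by auto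
      have "degree (smult (c i) ([:x0, d:] ^ i)) \<le> degree ([:x0, d:] ^ i)" by (rule degree_smult_le)
      also have "\<dots> \<le> degree [:x0, d:] * i" by (rule degree_power_le)
      also have "\<dots> \<le> 1 * i" by (intro mult_right_mono) auto
      finally show "degree (smult (c i) ([:x0, d:] ^ i)) \<le> m'" using i by simp
    qed simp
    then show ?thesis using Suc by (intro pderiv_iter_zero) auto
  qed
  then show ?thesis using ev by blast
qed

lemma sym_rank1:
  fixes F G :: "real \<Rightarrow> real" and cv :: "real \<Rightarrow> real \<Rightarrow> real"
  assumes sym: "\<And>s \<tau>. s \<in> I \<Longrightarrow> \<tau> \<in> I \<Longrightarrow> cv s \<tau> = cv \<tau> s"
    and prod: "\<And>s \<tau>. s \<in> I \<Longrightarrow> \<tau> \<in> I \<Longrightarrow> cv s \<tau> = F \<tau> * G s"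
  shows "(\<exists>c. \<forall>s\<in>I. \<forall>\<tau>\<in>I. cv s \<tau> = c * F s * F \<tau>) \<and> (\<exists>c. \<forall>s\<in>I. \<forall>\<tau>\<in>I. cv s \<tau> = c * G s * G \<tau>)"
proof
  have FG: "F \<tau> * G s = F s * G \<tau>" if "s \<in> I" "\<tau> \<in> I" for s \<tau>
    using sym[OF that] prod[OF that] prod[OF that(2,1)] by simp
  show "\<exists>c. \<forall>s\<in>I. \<forall>\<tau>\<in>I. cv s \<tau> = c * F s * F \<tau>"
  proof (cases "\<exists>\<tau>1\<in>I. F \<tau>1 \<noteq> 0")
    case True
    then obtain \<tau>1 where t1: "\<tau>1 \<in> I" "F \<tau>1 \<noteq> 0" by blast
    show ?thesis
    proof (intro exI[of _ "G \<tau>1 / F \<tau>1"] ballI)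
      fix s \<tau> assume st: "s \<in> I" "\<tau> \<in> I"
      have "G s = F s * G \<tau>1 / F \<tau>1" using FG[OF st(1) t1(1)] t1(2) by (simp add: field_simps)
      then show "cv s \<tau> = G \<tau>1 / F \<tau>1 * F s * F \<tau>" using prod[OF st] by simp
    qed
  next
    case False
    then show ?thesis using prod by (intro exI[of _ 0]) auto
  qed
  show "\<exists>c. \<forall>s\<in>I. \<forall>\<tau>\<in>I. cv s \<tau> = c * G s * G \<tau>"
  proof (cases "\<exists>\<tau>1\<in>I. G \<tau>1 \<noteq> 0")
    case True
    then obtain \<tau>1 where t1: "\<tau>1 \<in> I" "G \<tau>1 \<noteq> 0" by blast
    show ?thesis
    proof (intro exI[of _ "F \<tau>1 / G \<tau>1"] ballI)
      fix s \<tau> assume st: "s \<in> I" "\<tau> \<in> I"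
      have "F \<tau> = F \<tau>1 * G \<tau> / G \<tau>1" using FG[OF st(2) t1(1)] t1(2) by (simp add: field_simps)
      then show "cv s \<tau> = F \<tau>1 / G \<tau>1 * G s * G \<tau>" using prod[OF st] by simp
    qed
  next
    case False
    then show ?thesis using prod by (intro exI[of _ 0]) auto
  qed
qed

lemma sq_int_shift:
  fixes f :: "'a \<Rightarrow> real"
  assumes P: "prob_space M" and [measurable]: "f \<in> borel_measurable M" and i: "integrable M (\<lambda>x. (f x)\<^sup>2)"
  shows "integrable M (\<lambda>x. (f x - c)\<^sup>2)"
proof -
  interpret prob_space M by fact
  have "integrable M f" by (rule square_integrable_imp_integrable[OF assms(2) i])
  then have "integrable M (\<lambda>x. (f x)\<^sup>2 - 2 * c * f x + c\<^sup>2)"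
    using i by auto
  then show ?thesis by (simp add: power2_diff algebra_simps)
qed

lemma prod_int:
  fixes f g :: "'a \<Rightarrow> real"
  assumes [measurable]: "f \<in> borel_measurable M" "g \<in> borel_measurable M"
    and "integrable M (\<lambda>x. (f x)\<^sup>2)" "integrable M (\<lambda>x. (g x)\<^sup>2)"
  shows "integrable M (\<lambda>x. f x * g x)"
proof -
  have i2: "integrable M (\<lambda>x. (f x)\<^sup>2 + (g x)\<^sup>2)" using assms by auto
  have m: "(\<lambda>x. f x * g x) \<in> borel_measurable M" by measurable
  have ae: "AE x in M. norm (f x * g x) \<le> norm ((f x)\<^sup>2 + (g x)\<^sup>2)"
  proof (intro AE_I2)
    fix x
    have "2 * \<bar>f x\<bar> * \<bar>g x\<bar> \<le> (f x)\<^sup>2 + (g x)\<^sup>2"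
      using sum_squares_ge_zero[of "\<bar>f x\<bar> - \<bar>g x\<bar>" 0]
      by (simp add: power2_eq_square algebra_simps)
    moreover have "0 \<le> \<bar>f x\<bar> * \<bar>g x\<bar>" by simp
    ultimately have "\<bar>f x\<bar> * \<bar>g x\<bar> \<le> (f x)\<^sup>2 + (g x)\<^sup>2" by linarith
    then show "norm (f x * g x) \<le> norm ((f x)\<^sup>2 + (g x)\<^sup>2)"
      by (simp add: abs_mult)
  qed
  show ?thesis by (rule Bochner_Integration.integrable_bound[OF i2 m ae])
qed

lemma decompose_h:
  fixes w :: "real \<Rightarrow> 'a \<Rightarrow> real" and h :: "real \<Rightarrow> real"
  assumes P: "prob_space M"
    and L2: "\<And>\<tau>. \<tau> \<in> I \<Longrightarrow> w \<tau> \<in> borel_measurable M \<and> integrable M (\<lambda>x. (w \<tau> x)\<^sup>2)"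
    and covh: "\<And>s \<tau>. s \<in> I \<Longrightarrow> \<tau> \<in> I \<Longrightarrow> covar M (w s) (w \<tau>) = c * h s * h \<tau>"
  shows "\<exists>U. U \<in> borel_measurable M \<and> integrable M (\<lambda>x. (U x)\<^sup>2) \<and>
            (\<forall>\<tau>\<in>I. AE x in M. w \<tau> x = mean M (w \<tau>) + h \<tau> * U x)"
proof -
  define X where "X \<tau> x = w \<tau> x - mean M (w \<tau>)" for \<tau> x
  have Xm: "X \<tau> \<in> borel_measurable M" if "\<tau> \<in> I" for \<tau>
    using L2[OF that] unfolding X_def[abs_def] by (intro borel_measurable_diff) auto
  have Xsq: "integrable M (\<lambda>x. (X \<tau> x)\<^sup>2)" if "\<tau> \<in> I" for \<tau>
    using L2[OF that] sq_int_shift[OF P] unfolding X_def by blast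
  have Xprod: "integrable M (\<lambda>x. X s x * X \<tau> x)" if "s \<in> I" "\<tau> \<in> I" for s \<tau>
    by (rule prod_int[OF Xm[OF that(1)] Xm[OF that(2)] Xsq[OF that(1)] Xsq[OF that(2)]])
  have cov: "(\<integral>x. X s x * X \<tau> x \<partial>M) = c * h s * h \<tau>" if "s \<in> I" "\<tau> \<in> I" for s \<tau>
    using covh[OF that] by (simp add: covar_def X_def)
  have zero: "AE x in M. X \<tau> x = r * X s x"
    if st: "\<tau> \<in> I" "s \<in> I" and eq: "c * h \<tau> * h \<tau> - 2 * r * (c * h \<tau> * h s) + r\<^sup>2 * (c * h s * h s) = 0" for \<tau> s r
  proof -
    have int: "integrable M (\<lambda>x. (X \<tau> x)\<^sup>2 - 2 * r * (X \<tau> x * X s x) + r\<^sup>2 * (X s x)\<^sup>2)"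
      using Xsq[OF st(1)] Xsq[OF st(2)] Xprod[OF st] by auto
    have "(\<integral>x. (X \<tau> x)\<^sup>2 - 2 * r * (X \<tau> x * X s x) + r\<^sup>2 * (X s x)\<^sup>2 \<partial>M)
        = (\<integral>x. (X \<tau> x)\<^sup>2 \<partial>M) - 2 * r * (\<integral>x. X \<tau> x * X s x \<partial>M) + r\<^sup>2 * (\<integral>x. (X s x)\<^sup>2 \<partial>M)"
      using Xsq[OF st(1)] Xsq[OF st(2)] Xprod[OF st] by simp
    also have "\<dots> = 0"
      using cov[OF st(1) st(1)] cov[OF st] cov[OF st(2) st(2)] eq by (simp add: power2_eq_square)
    finally have i0: "(\<integral>x. (X \<tau> x - r * X s x)\<^sup>2 \<partial>M) = 0"
      by (simp add: power2_diff power_mult_distrib algebra_simps)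
    have int2: "integrable M (\<lambda>x. (X \<tau> x - r * X s x)\<^sup>2)"
      using int by (simp add: power2_diff power_mult_distrib algebra_simps)
    have "AE x in M. (X \<tau> x - r * X s x)\<^sup>2 = 0"
      using integral_nonneg_eq_0_iff_AE[OF int2] i0 by simp
    then show ?thesis by eventually_elim simp
  qed
  show ?thesis
  proof (cases "\<exists>\<tau>1\<in>I. h \<tau>1 \<noteq> 0")
    case True
    then obtain \<tau>1 where t1: "\<tau>1 \<in> I" "h \<tau>1 \<noteq> 0" by blast
    define U where "U x = X \<tau>1 x / h \<tau>1" for x
    have Um: "U \<in> borel_measurable M" unfolding U_def[abs_def] using Xm[OF t1(1)] by (intro borel_measurable_divide) auto
    have Ui: "integrable M (\<lambda>x. (U x)\<^sup>2)"
      unfolding U_def using Xsq[OF t1(1)] by (simp add: power_divide)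
    have "AE x in M. w \<tau> x = mean M (w \<tau>) + h \<tau> * U x" if t: "\<tau> \<in> I" for \<tau>
    proof -
      have "AE x in M. X \<tau> x = (h \<tau> / h \<tau>1) * X \<tau>1 x"
        by (rule zero[OF t t1(1)]) (use t1(2) in \<open>simp add: field_simps power2_eq_square\<close>)
      then show ?thesis by eventually_elim (simp add: X_def U_def)
    qed
    then show ?thesis using Um Ui by blast
  next
    case False
    have "AE x in M. w \<tau> x = mean M (w \<tau>) + h \<tau> * 0" if t: "\<tau> \<in> I" for \<tau>
    proof -
      have "AE x in M. X \<tau> x = 0 * X \<tau> x"
        by (rule zero[OF t t]) (use False t in simp)
      then show ?thesis by eventually_elim (simp add: X_def)
    qed
    then show ?thesis by (intro exI[of _ "\<lambda>x. 0"]) auto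
  qed
qed

lemma small_int:
  fixes G f :: "real \<Rightarrow> real"
  assumes l0: "(G \<longlongrightarrow> 0) (at_right 0)" and l1: "(G \<longlongrightarrow> 0) (at_left 1)"
    and I: "\<forall>a b. 0 < a \<longrightarrow> a \<le> b \<longrightarrow> b < 1 \<longrightarrow> (f has_integral G b - G a) {a..b}"
    and e: "e > 0"
  shows "\<exists>\<delta>>0. \<forall>a b. 0 < a \<and> a < \<delta> \<and> 1 - \<delta> < b \<and> b < 1 \<longrightarrow> \<bar>integral {a..b} f\<bar> \<le> e"
proof -
  have "\<forall>\<^sub>F x in at_right 0. dist (G x) 0 < e / 2" using e by (intro tendstoD[OF l0]) simp
  then obtain b0 where b0: "b0 > 0" "\<And>y. y > 0 \<Longrightarrow> y < b0 \<Longrightarrow> \<bar>G y\<bar> < e / 2"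
    unfolding eventually_at_right_field by auto
  have "\<forall>\<^sub>F x in at_left 1. dist (G x) 0 < e / 2" using e by (intro tendstoD[OF l1]) simp
  then obtain b1 where b1: "b1 < 1" "\<And>y. y > b1 \<Longrightarrow> y < 1 \<Longrightarrow> \<bar>G y\<bar> < e / 2"
    unfolding eventually_at_left_field by auto
  show ?thesis
  proof (intro exI[of _ "min b0 (1 - b1)"] conjI allI impI)
    show "min b0 (1 - b1) > 0" using b0 b1 by simp
    fix a b assume ab: "0 < a \<and> a < min b0 (1 - b1) \<and> 1 - min b0 (1 - b1) < b \<and> b < 1"
    show "\<bar>integral {a..b} f\<bar> \<le> e"
    proof (cases "a \<le> b")
      case True
      then have "integral {a..b} f = G b - G a" using I ab by (blast intro: integral_unique)
      moreover have "\<bar>G a\<bar> < e / 2" "\<bar>G b\<bar> < e / 2" using ab b0 b1 by auto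
      ultimately show ?thesis by simp
    next
      case False
      then show ?thesis using e by simp
    qed
  qed
qed

lemma in_I:
  fixes I :: "real set" and t0 \<beta> T t :: real
  assumes "is_interval I" "t0 \<in> I" "t0 + \<beta> * T \<in> I" "\<beta> \<in> {-1, 1}" "T > 0" "t \<in> {0..1}"
  shows "t0 + \<beta> * T * t \<in> I"
proof -
  have iv: "\<And>a b x. a \<in> I \<Longrightarrow> b \<in> I \<Longrightarrow> a \<le> x \<Longrightarrow> x \<le> b \<Longrightarrow> x \<in> I"
    using assms(1) unfolding is_interval_1 by blast
  show ?thesis
  proof (cases "\<beta> = 1")
    case True
    then show ?thesis using assms iv[of t0 "t0 + \<beta> * T" "t0 + \<beta> * T * t"]
      by (auto simp: mult_left_le)
  next
    case False
    then have "\<beta> = -1" using assms by auto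
    then show ?thesis using assms iv[of "t0 + \<beta> * T" t0 "t0 + \<beta> * T * t"]
      by (auto simp: mult_left_le)
  qed
qed

theorem theorem2:
  fixes M :: "'a measure" and w :: "real \<Rightarrow> 'a \<Rightarrow> real" and I :: "real set"
    and n N :: nat and \<beta> \<mu> \<kappa> \<xi> t0 T :: real and X :: "'a \<Rightarrow> real"
  assumes "prob_space M"
    and "open I" and "is_interval I" and "I \<subseteq> {0..}"
    and "\<beta> \<in> {-1, 1}" and "\<kappa> > -1" and "\<mu> > -1"
    and "N \<ge> n" and "\<xi> \<in> {0..1}" and "t0 \<in> I" and "T > 0" and "t0 + \<beta> * T \<in> I"
    and "noise_C1 M w" and "noise_C2 M w I n" and "noise_C3 M w I n"
    and "jacobi_noise_error M w n N \<mu> \<kappa> \<xi> \<beta> T t0 X"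
  shows "AE x in M. X x = 0"
proof -
  note P = assms(1)
  have L2: "w \<tau> \<in> borel_measurable M \<and> integrable M (\<lambda>x. (w \<tau> x)\<^sup>2)" if "\<tau> \<in> I" for \<tau>
    using assms(13) assms(4) that unfolding noise_C1_def by auto
  obtain \<nu> \<eta> \<eta>' n1 n2 where mn: "min n1 n2 < n"
    and C3: "\<And>s \<tau>. s \<in> I \<Longrightarrow> \<tau> \<in> I \<Longrightarrow> mean M (w \<tau>) = (\<Sum>i<n. \<nu> i * \<tau> ^ i) \<and>
           covar M (w s) (w \<tau>) = (\<Sum>i\<le>n1. \<eta> i * \<tau> ^ i) * (\<Sum>i\<le>n2. \<eta>' i * s ^ i)"
    using assms(15) unfolding noise_C3_def by blast
  define F where "F \<tau> = (\<Sum>i<Suc n1. \<eta> i * \<tau> ^ i)" for \<tau> :: real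
  define G where "G \<tau> = (\<Sum>i<Suc n2. \<eta>' i * \<tau> ^ i)" for \<tau> :: real
  have prod: "covar M (w s) (w \<tau>) = F \<tau> * G s" if "s \<in> I" "\<tau> \<in> I" for s \<tau>
    using C3[OF that] by (simp add: F_def G_def lessThan_Suc_atMost)
  have sym: "covar M (w s) (w \<tau>) = covar M (w \<tau>) (w s)" for s \<tau>
    by (simp add: covar_def mult.commute)
  note r1 = sym_rank1[of I "\<lambda>s \<tau>. covar M (w s) (w \<tau>)" F G, OF sym prod]
  obtain c m e where me: "m \<le> n" and hcov: "\<forall>s\<in>I. \<forall>\<tau>\<in>I. covar M (w s) (w \<tau>) = c * (\<Sum>i<m. e i * s ^ i) * (\<Sum>i<m. e i * \<tau> ^ i)"
  proof (cases "n1 < n")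
    case True
    obtain c where "\<forall>s\<in>I. \<forall>\<tau>\<in>I. covar M (w s) (w \<tau>) = c * F s * F \<tau>" using r1 by blast
    then show ?thesis using that[of "Suc n1" c \<eta>] True unfolding F_def by auto
  next
    case False
    then have "n2 < n" using mn by simp
    obtain c where "\<forall>s\<in>I. \<forall>\<tau>\<in>I. covar M (w s) (w \<tau>) = c * G s * G \<tau>" using r1 by blast
    then show ?thesis using that[of "Suc n2" c \<eta>'] \<open>n2 < n\<close> unfolding G_def by auto
  qed
  define h where "h \<tau> = (\<Sum>i<m. e i * \<tau> ^ i)" for \<tau> :: real
  have hc: "covar M (w s) (w \<tau>) = c * h s * h \<tau>" if "s \<in> I" "\<tau> \<in> I" for s \<tau>
    using hcov that by (simp add: h_def)
  from decompose_h[OF P L2 hc] obtain U where U: "U \<in> borel_measurable M \<and> integrable M (\<lambda>x. (U x)\<^sup>2) \<and>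
    (\<forall>\<tau>\<in>I. AE x in M. w \<tau> x = mean M (w \<tau>) + h \<tau> * U x)"
    by (rule exE)
  have Um: "U \<in> borel_measurable M" using U by (rule conjunct1)
  have Ui: "integrable M (\<lambda>x. (U x)\<^sup>2)" using U by (metis (no_types))
  have dec0: "\<forall>\<tau>\<in>I. AE x in M. w \<tau> x = mean M (w \<tau>) + h \<tau> * U x" using U by (metis (no_types))
  obtain qm where qm: "\<And>\<tau>. (\<Sum>i<n. \<nu> i * (t0 + \<beta> * T * \<tau>) ^ i) = poly qm \<tau>" "(pderiv ^^ n) qm = 0"
    using poly_affine_sum[of \<nu> t0 "\<beta> * T" n] by auto
  obtain qh0 where qh0: "\<And>\<tau>. (\<Sum>i<m. e i * (t0 + \<beta> * T * \<tau>) ^ i) = poly qh0 \<tau>" "(pderiv ^^ m) qh0 = 0"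
    using poly_affine_sum[of e t0 "\<beta> * T" m] by auto
  have qh: "(pderiv ^^ n) qh0 = 0" using pderiv_iter_mono[OF qh0(2) me] .
  have inI: "t0 + \<beta> * T * t \<in> I" if "t \<in> {0..1}" for t
    using in_I[OF assms(3,10,12,5,11) that] .
  define k where "k = jacobi_kernel n N \<mu> \<kappa> \<xi> \<beta> T"
  define W where "W t = w (t0 + \<beta> * T * t)" for t
  have Wm: "W t \<in> borel_measurable M" if "t \<in> {0..1}" for t
    using L2[OF inI[OF that]] by (simp add: W_def)
  have dec: "AE x in M. W t x = poly qm t + poly qh0 t * U x" if t: "t \<in> {0..1}" for t
  proof -
    have "mean M (w (t0 + \<beta> * T * t)) = poly qm t"
      using C3[OF inI[OF t] inI[OF t]] qm(1)[of t] by simp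
    moreover have "h (t0 + \<beta> * T * t) = poly qh0 t" using qh0(1)[of t] by (simp add: h_def)
    ultimately show ?thesis using dec0 inI[OF t] by (auto simp: W_def)
  qed
  have fin: "L2n M U \<noteq> \<infinity>"
    using integrableD(2)[OF Ui] unfolding L2n_def by simp
  define u where "u = enn2real (L2n M U)"
  have u: "L2n M U = ennreal u" "u \<ge> 0"
    using fin by (auto simp: u_def less_top)
  have c1: "continuous_on {0<..<1} (\<lambda>t. k t * poly qm t)"
    unfolding k_def by (intro continuous_intros kernel_cont[unfolded continuous_on_def, folded continuous_on_def])
  have c2: "continuous_on {0<..<1} (\<lambda>t. k t * poly qh0 t)"
    unfolding k_def by (intro continuous_intros kernel_cont[unfolded continuous_on_def, folded continuous_on_def])
  note ibp1 = kernel_ibp[OF assms(6,7) qm(2), of N \<xi> \<beta> T]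
  note ibp2 = kernel_ibp[OF assms(6,7) qh, of N \<xi> \<beta> T]
  have IA: "\<exists>\<delta>>0. \<forall>a b. 0 < a \<and> a < \<delta> \<and> 1 - \<delta> < b \<and> b < 1 \<longrightarrow>
               \<bar>integral {a..b} (\<lambda>t. k t * poly qm t)\<bar> \<le> e \<and> \<bar>integral {a..b} (\<lambda>t. k t * poly qh0 t)\<bar> \<le> e"
    if e: "e > 0" for e
  proof -
    obtain d1 where d1: "d1 > 0" "\<forall>a b. 0 < a \<and> a < d1 \<and> 1 - d1 < b \<and> b < 1 \<longrightarrow> \<bar>integral {a..b} (\<lambda>t. k t * poly qm t)\<bar> \<le> e"
      using small_int[of _ "\<lambda>t. k t * poly qm t", OF _ _ _ e] ibp1 unfolding k_def by blast
    obtain d2 where d2: "d2 > 0" "\<forall>a b. 0 < a \<and> a < d2 \<and> 1 - d2 < b \<and> b < 1 \<longrightarrow> \<bar>integral {a..b} (\<lambda>t. k t * poly qh0 t)\<bar> \<le> e"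
      using small_int[of _ "\<lambda>t. k t * poly qh0 t", OF _ _ _ e] ibp2 unfolding k_def by blast
    show ?thesis using d1 d2 by (intro exI[of _ "min d1 d2"]) auto
  qed
  have Xi: "ms_integral_01 M (\<lambda>\<tau> x. k \<tau> * W \<tau> x) X"
    using assms(16) unfolding jacobi_noise_error_def k_def W_def .
  show ?thesis
    by (rule step2[OF P Wm Um u dec c1 c2 IA Xi])
qed

end
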